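(* Consider the principal–agent model described in the context. For every $a>0$, \[ \sup_{x\in(L(a),\bar x]}\frac{f_a(x\mid a)}{f(x\mid a)}>0. \]
   Context: Model. Effort $a\ge0$; the outcome $X(a)$ is a continuous random variable with support $[L(a),\bar x]$, where $\bar x>0$ is fixed (possibly $+\infty$) and $L:[0,\infty)\to[0,\bar x)$ is nondecreasing on $[0,\infty)$ and continuously differentiable on $(0,\infty)$. $X(a)$ has density $f(x\mid a)$ and cdf $F(x\mid a)$; for each fixed $x\in(L(a),\bar x]$, $f(x\mid a)$ and $F(x\mid a)$ are differentiable in $a>0$ with derivatives $f_a,F_a$, both continuous on $(L(a),\bar x]\times(0,\infty)$, and $F_a<0$ there. Standing assumption (used here): for any nonnegative function $s$ with $\int_{L(a)}^{\bar x}s(x)f(x\mid a)\,dx<\infty$, $\lim_{h\uparrow0}\int_{L(a)}^{\bar x}\frac{f(x\mid a+h)-f(x\mid a)}{h}s(x)\,dx=\int_{L(a)}^{\bar x}\lim_{h\uparrow0}\frac{f(x\mid a+h)-f(x\mid a)}{h}s(x)\,dx$. (The paper's further standing assumptions: $\mathbb{E}[X(a)\mid a]$ is finite and continuous in $a$, $\mathbb{E}[X(a)\mid a]-c(a)\to-\infty$ as $a\to\infty$ for the effort cost $c$, and $a\mapsto\sup_{x\in(L(a),\bar x]}f_a/f$ is continuous on $(0,\infty)$.) *)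

theory Defs
  imports "HOL-Analysis.Analysis"
begin

definition supp_set :: "(real \<Rightarrow> real) \<Rightarrow> ereal \<Rightarrow> real \<Rightarrow> real set" where
  "supp_set L xbar a = {x. L a \<le> x \<and> ereal x \<le> xbar}"

definition osupp_set :: "(real \<Rightarrow> real) \<Rightarrow> ereal \<Rightarrow> real \<Rightarrow> real set" where
  "osupp_set L xbar a = {x. L a < x \<and> ereal x \<le> xbar}"

definition density_support :: "(real \<Rightarrow> real) \<Rightarrow> real set" where
  "density_support g = {x. \<forall>e>0. (\<integral>t\<in>{x-e<..<x+e}. g t \<partial>lborel) > 0}"

text \<open>The model of the context. f x a = f(x|a), F x a = F(x|a), fa x a = f_a(x|a),
  Fa x a = F_a(x|a).\<close>
definition pa_model ::
  "(real \<Rightarrow> real) \<Rightarrow> ereal \<Rightarrow> (real \<Rightarrow> real \<Rightarrow> real) \<Rightarrow> (real \<Rightarrow> real \<Rightarrow> real)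
   \<Rightarrow> (real \<Rightarrow> real \<Rightarrow> real) \<Rightarrow> (real \<Rightarrow> real \<Rightarrow> real) \<Rightarrow> bool" where
  "pa_model L xbar f F fa Fa \<longleftrightarrow>
     xbar > 0 \<and>
     \<comment> \<open>L : [0,\<infinity>) \<rightarrow> [0, xbar), nondecreasing, C^1 on (0,\<infinity>)\<close>
     (\<forall>a\<ge>0. 0 \<le> L a \<and> ereal (L a) < xbar) \<and>
     mono_on {0..} L \<and>
     (\<exists>L'. continuous_on {0<..} L' \<and> (\<forall>a>0. (L has_real_derivative L' a) (at a))) \<and>
     \<comment> \<open>X(a) is continuous with density f(.|a), cdf F(.|a), support [L a, xbar]\<close>
     (\<forall>a\<ge>0. (\<lambda>x. f x a) \<in> borel_measurable lborel \<and> (\<forall>x. 0 \<le> f x a) \<and>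
             integrable lborel (\<lambda>x. f x a) \<and> (\<integral>x. f x a \<partial>lborel) = 1 \<and>
             (\<forall>x. F x a = (\<integral>t\<in>{..x}. f t a \<partial>lborel)) \<and>
             density_support (\<lambda>x. f x a) = supp_set L xbar a) \<and>
     \<comment> \<open>differentiability in a of f and F on (L a, xbar]\<close>
     (\<forall>a>0. \<forall>x\<in>osupp_set L xbar a.
        ((\<lambda>b. f x b) has_real_derivative fa x a) (at a) \<and>
        ((\<lambda>b. F x b) has_real_derivative Fa x a) (at a) \<and>
        Fa x a < 0) \<and>
     continuous_on {(x, a). a > 0 \<and> x \<in> osupp_set L xbar a} (\<lambda>(x, a). fa x a) \<and>
     continuous_on {(x, a). a > 0 \<and> x \<in> osupp_set L xbar a} (\<lambda>(x, a). Fa x a) \<and>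
     \<comment> \<open>standing interchange-of-limit assumption\<close>
     (\<forall>a>0. \<forall>s::real \<Rightarrow> real. s \<in> borel_measurable lborel \<longrightarrow> (\<forall>x. 0 \<le> s x) \<longrightarrow>
        set_integrable lborel (supp_set L xbar a) (\<lambda>x. s x * f x a) \<longrightarrow>
        ((\<lambda>h. \<integral>x\<in>supp_set L xbar a. (f x (a + h) - f x a) / h * s x \<partial>lborel)
           \<longlongrightarrow> (\<integral>x\<in>supp_set L xbar a. fa x a * s x \<partial>lborel)) (at_left 0))"

end

theory Submission
  imports Defs
begin

lemma ae_zero_outside:
  fixes g :: "real \<Rightarrow> real" and U :: "real set"
  assumes nn: "\<forall>x. 0 \<le> g x" and int: "integrable lborel g"
   and U: "\<forall>y\<in>U. \<exists>e>0. \<not> ((\<integral>t\<in>{y-e<..<y+e}. g t \<partial>lborel) > 0)"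
  shows "AE t in lborel. t \<in> U \<longrightarrow> g t = 0"
proof -
  obtain e where e: "\<And>y. y \<in> U \<Longrightarrow> e y > 0 \<and> \<not> ((\<integral>t\<in>{y - e y<..<y + e y}. g t \<partial>lborel) > 0)"
    using U by metis
  have loc: "AE t in lborel. t \<in> {y - e y<..<y + e y} \<longrightarrow> g t = 0" if y: "y \<in> U" for y
  proof -
    let ?B = "{y - e y<..<y + e y}"
    have i: "integrable lborel (\<lambda>t. indicator ?B t *\<^sub>R g t)"
      by (rule integrable_mult_indicator) (auto simp: int)
    have "(\<integral>t\<in>?B. g t \<partial>lborel) \<ge> 0"
      unfolding set_lebesgue_integral_def
      by (rule integral_nonneg_AE) (auto simp: nn indicator_def)
    with e[OF y] have "(\<integral>t. indicator ?B t *\<^sub>R g t \<partial>lborel) = 0"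
      by (simp add: set_lebesgue_integral_def)
    then have "AE t in lborel. indicator ?B t *\<^sub>R g t = 0"
    proof -
      have "AE t in lborel. 0 \<le> indicator ?B t *\<^sub>R g t"
        by (rule AE_I2) (simp add: nn)
      then show ?thesis using integral_nonneg_eq_0_iff_AE[OF i] \<open>(\<integral>t. indicator ?B t *\<^sub>R g t \<partial>lborel) = 0\<close> by blast
    qed
    then show ?thesis
      by eventually_elim (auto simp: indicator_def)
  qed
  define F where "F = (\<lambda>y. {y - e y<..<y + e y}) ` U"
  have opn: "\<And>S. S \<in> F \<Longrightarrow> open S" unfolding F_def by auto
  obtain F' where F': "F' \<subseteq> F" "countable F'" "\<Union>F' = \<Union>F"
    using Lindelof[of F, OF opn] by blast
  have aeF: "AE t in lborel. \<forall>B\<in>F'. t \<in> B \<longrightarrow> g t = 0"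
  proof (rule AE_ball_countable')
    fix B assume "B \<in> F'"
    then obtain y where "y \<in> U" "B = {y - e y<..<y + e y}" using F' unfolding F_def by auto
    then show "AE t in lborel. t \<in> B \<longrightarrow> g t = 0" using loc by auto
  qed (rule F'(2))
  have UF: "U \<subseteq> \<Union>F'"
  proof
    fix y assume y: "y \<in> U"
    then have "y \<in> {y - e y<..<y + e y}" using e[OF y] by auto
    then have "y \<in> \<Union>F" using y unfolding F_def by blast
    then show "y \<in> \<Union>F'" using F'(3) by simp
  qed
  show ?thesis using aeF
  proof (rule eventually_mono)
    fix t assume h: "\<forall>B\<in>F'. t \<in> B \<longrightarrow> g t = 0"
    show "t \<in> U \<longrightarrow> g t = 0"
    proof
      assume "t \<in> U"
      then obtain B where "B \<in> F'" "t \<in> B" using UF by blast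
      then show "g t = 0" using h by blast
    qed
  qed
qed

lemma supp_set_sets: "supp_set L xbar a \<in> sets lborel"
proof (cases xbar)
  case (real r)
  then have "supp_set L xbar a = {L a..r}" by (auto simp: supp_set_def)
  then show ?thesis by simp
next
  case PInf
  then have "supp_set L xbar a = {L a..}" by (auto simp: supp_set_def)
  then show ?thesis by simp
next
  case MInf
  then have "supp_set L xbar a = {}" by (auto simp: supp_set_def)
  then show ?thesis by simp
qed

theorem lemmaA1:
  fixes L :: "real \<Rightarrow> real" and xbar :: ereal
    and f F fa Fa :: "real \<Rightarrow> real \<Rightarrow> real" and a :: real
  assumes "pa_model L xbar f F fa Fa"
    and "a > 0"
  shows "(SUP x\<in>osupp_set L xbar a. ereal (fa x a / f x a)) > 0"
proof -
  note M = assms(1)[unfolded pa_model_def]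
  have xb: "xbar > 0" using M by blast
  have La: "ereal (L a) < xbar" using M assms(2) by auto
  have fb: "\<And>b. b \<ge> 0 \<Longrightarrow> (\<lambda>x. f x b) \<in> borel_measurable lborel \<and> (\<forall>x. 0 \<le> f x b) \<and>
             integrable lborel (\<lambda>x. f x b) \<and> (\<integral>x. f x b \<partial>lborel) = 1 \<and>
             (\<forall>x. F x b = (\<integral>t\<in>{..x}. f t b \<partial>lborel)) \<and>
             density_support (\<lambda>x. f x b) = supp_set L xbar b"
    using M by blast
  have der: "\<And>x. x \<in> osupp_set L xbar a \<Longrightarrow> ((\<lambda>b. f x b) has_real_derivative fa x a) (at a) \<and>
        ((\<lambda>b. F x b) has_real_derivative Fa x a) (at a) \<and> Fa x a < 0"
    using M assms(2) by blast
  have stand: "\<And>s::real \<Rightarrow> real. s \<in> borel_measurable lborel \<Longrightarrow> (\<forall>x. 0 \<le> s x) \<Longrightarrow>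
        set_integrable lborel (supp_set L xbar a) (\<lambda>x. s x * f x a) \<Longrightarrow>
        ((\<lambda>h. \<integral>x\<in>supp_set L xbar a. (f x (a + h) - f x a) / h * s x \<partial>lborel)
           \<longlongrightarrow> (\<integral>x\<in>supp_set L xbar a. fa x a * s x \<partial>lborel)) (at_left 0)"
    using M assms(2) by blast
  obtain x0 where x0: "L a < x0" "ereal x0 \<le> xbar"
  proof (cases xbar)
    case (real r)
    then show ?thesis using that La by auto
  next
    case PInf
    then show ?thesis using that[of "L a + 1"] by auto
  next
    case MInf
    then show ?thesis using xb by auto
  qed
  have x0o: "x0 \<in> osupp_set L xbar a" using x0 by (simp add: osupp_set_def)
  define S where "S = supp_set L xbar a"
  define s :: "real \<Rightarrow> real" where "s = indicator {x0<..}"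
  have Ssets: "S \<in> sets lborel" unfolding S_def by (rule supp_set_sets)
  have key: "integrable lborel (\<lambda>t. indicator S t * (f t b * s t)) \<and>
             (\<integral>t. indicator S t * (f t b * s t) \<partial>lborel) = 1 - F x0 b" if b: "b \<ge> 0" for b
  proof -
    note fbb = fb[OF b]
    have ae: "AE t in lborel. t \<in> {t. xbar < ereal t} \<longrightarrow> f t b = 0"
    proof (rule ae_zero_outside)
      show "\<forall>x. 0 \<le> f x b" using fbb by blast
      show "integrable lborel (\<lambda>x. f x b)" using fbb by blast
      show "\<forall>y\<in>{t. xbar < ereal t}. \<exists>e>0. \<not> 0 < (\<integral>t\<in>{y - e<..<y + e}. f t b \<partial>lborel)"
      proof
        fix y assume "y \<in> {t. xbar < ereal t}"
        then have "y \<notin> supp_set L xbar b" by (auto simp: supp_set_def)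
        then have "y \<notin> density_support (\<lambda>x. f x b)" using fbb by simp
        then show "\<exists>e>0. \<not> 0 < (\<integral>t\<in>{y - e<..<y + e}. f t b \<partial>lborel)"
          unfolding density_support_def by auto
      qed
    qed
    have ae2: "AE t in lborel. indicator S t * (f t b * s t) = indicator {x0<..} t * f t b"
      using ae
    proof eventually_elim
      case (elim t)
      show ?case
      proof (cases "x0 < t")
        case True
        then show ?thesis using elim x0 unfolding S_def s_def supp_set_def
          by (cases "ereal t \<le> xbar") (auto simp: indicator_def)
      next
        case False
        then show ?thesis unfolding s_def by (simp add: indicator_def)
      qed
    qed
    have i1: "integrable lborel (\<lambda>t. indicator {x0<..} t * f t b)"
      using integrable_mult_indicator[of "{x0<..}" lborel "\<lambda>t. f t b"] fbb by simp
    have i2: "integrable lborel (\<lambda>t. indicator {..x0} t * f t b)"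
      using integrable_mult_indicator[of "{..x0}" lborel "\<lambda>t. f t b"] fbb by simp
    have mfb: "(\<lambda>t. f t b) \<in> borel_measurable lborel" using fbb by blast
    have meas: "(\<lambda>t. indicator S t * (f t b * s t)) \<in> borel_measurable lborel"
      unfolding s_def
      by (intro borel_measurable_times borel_measurable_indicator mfb Ssets) auto
    have meas2: "(\<lambda>t. indicator {x0<..} t * f t b) \<in> borel_measurable lborel"
      by (intro borel_measurable_times borel_measurable_indicator mfb) auto
    have int: "integrable lborel (\<lambda>t. indicator S t * (f t b * s t))"
      by (rule integrable_cong_AE_imp[OF i1 meas AE_symmetric[OF ae2]])
    have "(\<integral>t. indicator S t * (f t b * s t) \<partial>lborel) = (\<integral>t. indicator {x0<..} t * f t b \<partial>lborel)"
      by (rule integral_cong_AE[OF meas meas2 ae2])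
    also have "\<dots> = (\<integral>t. f t b \<partial>lborel) - (\<integral>t. indicator {..x0} t * f t b \<partial>lborel)"
    proof -
      have "(\<integral>t. f t b \<partial>lborel) = (\<integral>t. indicator {..x0} t * f t b + indicator {x0<..} t * f t b \<partial>lborel)"
        by (rule Bochner_Integration.integral_cong) (auto simp: indicator_def)
      also have "\<dots> = (\<integral>t. indicator {..x0} t * f t b \<partial>lborel) + (\<integral>t. indicator {x0<..} t * f t b \<partial>lborel)"
        by (rule Bochner_Integration.integral_add[OF i2 i1])
      finally show ?thesis by simp
    qed
    also have "\<dots> = 1 - F x0 b" using fbb by (simp add: set_lebesgue_integral_def)
    finally show ?thesis using int by simp
  qed
  have smeas: "s \<in> borel_measurable lborel" unfolding s_def by simp
  have snn: "\<forall>x. 0 \<le> s x" unfolding s_def by (simp add: indicator_def)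
  have sint: "set_integrable lborel S (\<lambda>x. s x * f x a)"
    using key[of a] assms(2) unfolding set_integrable_def by (simp add: mult.commute)
  have lim1: "((\<lambda>h. \<integral>x\<in>S. (f x (a + h) - f x a) / h * s x \<partial>lborel)
           \<longlongrightarrow> (\<integral>x\<in>S. fa x a * s x \<partial>lborel)) (at_left 0)"
    using stand[OF smeas snn sint[unfolded S_def]] unfolding S_def .
  have "((\<lambda>h. (F x0 (a + h) - F x0 a) / h) \<longlongrightarrow> Fa x0 a) (at 0)"
    using der[OF x0o] by (simp add: DERIV_def)
  then have "((\<lambda>h. (F x0 (a + h) - F x0 a) / h) \<longlongrightarrow> Fa x0 a) (at_left 0)"
    by (rule tendsto_mono[rotated]) (simp add: at_le)
  then have lim2: "((\<lambda>h. - ((F x0 (a + h) - F x0 a) / h)) \<longlongrightarrow> - Fa x0 a) (at_left 0)"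
    by (rule tendsto_minus)
  have ev: "\<forall>\<^sub>F h in at_left 0. - ((F x0 (a + h) - F x0 a) / h) =
      (\<integral>x\<in>S. (f x (a + h) - f x a) / h * s x \<partial>lborel)"
  proof -
    have "\<forall>\<^sub>F h in at_left (0::real). h > -a"
      using assms(2) by (intro eventually_at_leftI[of "-a"]) auto
    then show ?thesis
    proof eventually_elim
      case (elim h)
      have hb: "a + h \<ge> 0" using elim by simp
      have "(\<integral>x\<in>S. (f x (a + h) - f x a) / h * s x \<partial>lborel)
          = (\<integral>x. (indicator S x * (f x (a + h) * s x) - indicator S x * (f x a * s x)) / h \<partial>lborel)"
        unfolding set_lebesgue_integral_def
        by (rule Bochner_Integration.integral_cong) (auto simp: field_simps)
      also have "\<dots> = ((\<integral>x. indicator S x * (f x (a + h) * s x) \<partial>lborel) - (\<integral>x. indicator S x * (f x a * s x) \<partial>lborel)) / h"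
        using key[OF hb] key[of a] assms(2) by (simp add: Bochner_Integration.integral_diff)
      also have "\<dots> = - ((F x0 (a + h) - F x0 a) / h)"
        unfolding conjunct2[OF key[OF hb]] conjunct2[OF key[OF less_imp_le[OF assms(2)]]]
        by (simp add: minus_divide_left)
      finally show ?case by simp
    qed
  qed
  have lim3: "((\<lambda>h. \<integral>x\<in>S. (f x (a + h) - f x a) / h * s x \<partial>lborel) \<longlongrightarrow> - Fa x0 a) (at_left 0)"
    by (rule Lim_transform_eventually[OF lim2 ev])
  have Ival: "(\<integral>x\<in>S. fa x a * s x \<partial>lborel) = - Fa x0 a"
    using tendsto_unique[OF _ lim1 lim3] by simp
  have Ipos: "(\<integral>x\<in>S. fa x a * s x \<partial>lborel) > 0"
    using Ival der[OF x0o] by simp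
  obtain t where t: "t \<in> osupp_set L xbar a" "fa t a > 0"
  proof (rule ccontr)
    assume "\<not> thesis"
    then have np: "\<forall>t\<in>osupp_set L xbar a. fa t a \<le> 0" using that by force
    have "\<forall>x. indicator S x *\<^sub>R (fa x a * s x) \<le> 0"
    proof
      fix x
      show "indicator S x *\<^sub>R (fa x a * s x) \<le> 0"
      proof (cases "x \<in> S \<and> x0 < x")
        case True
        then have "x \<in> osupp_set L xbar a" using x0 unfolding S_def supp_set_def osupp_set_def by auto
        then show ?thesis using np True unfolding s_def by auto
      next
        case False
        then show ?thesis unfolding s_def by (auto simp: indicator_def)
      qed
    qed
    then have "(\<integral>x. - (indicator S x *\<^sub>R (fa x a * s x)) \<partial>lborel) \<ge> 0"
      by (intro integral_nonneg_AE AE_I2) auto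
    then have "(\<integral>x\<in>S. fa x a * s x \<partial>lborel) \<le> 0"
      unfolding set_lebesgue_integral_def by simp
    then show False using Ipos by simp
  qed
  have fpos: "f t a > 0"
  proof (rule ccontr)
    assume "\<not> f t a > 0"
    moreover have nn: "\<And>y. y \<ge> 0 \<Longrightarrow> 0 \<le> f t y" using fb by blast
    ultimately have z: "f t a = 0" using assms(2) nn[of a] by linarith
    have "fa t a = 0"
    proof (rule DERIV_local_min)
      show "((\<lambda>b. f t b) has_real_derivative fa t a) (at a)" using der[OF t(1)] by blast
      show "0 < a" by (rule assms(2))
      show "\<forall>y. \<bar>a - y\<bar> < a \<longrightarrow> f t a \<le> f t y" using z nn by auto
    qed
    then show False using t(2) by simp
  qed
  have "0 < ereal (fa t a / f t a)" using fpos t(2) by simp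
  also have "\<dots> \<le> (SUP x\<in>osupp_set L xbar a. ereal (fa x a / f x a))"
    by (rule SUP_upper[OF t(1)])
  finally show ?thesis .
qed

end
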